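(* Let $V$ be an $n$-dimensional vector space over a field of characteristic zero, let $A^{ab}$ and $B_{ab}$ be 2-forms, and let $P^a{}_b=A^{ac}B_{bc}$ and $T=P-\frac14[P]$. For even $k\geq 0$ define the $(1,1)$-tensors $$\mathrm{Idn}_k=\delta^{[a}_b A^{c_1c_2}\cdots A^{c_{k-1}c_k]}B_{c_1c_2}\cdots B_{c_{k-1}c_k},\qquad \mathrm{Id}_k=A^{a[c_1}A^{c_2c_3}\cdots A^{c_kc_{k+1}]}B_{bc_1}B_{c_2c_3}\cdots B_{c_kc_{k+1}}$$ (so $\mathrm{Id}_0=P$). Then for every even $k\geq2$: $$\mathrm{Idn}_k=-\frac{k}{k+1}\Bigl(\mathrm{Id}_{k-2}-\frac1k[\mathrm{Id}_{k-2}]\Bigr),\qquad \mathrm{Id}_k=-\frac{k}{k+1}P\Bigl(\mathrm{Id}_{k-2}-\frac1k[\mathrm{Id}_{k-2}]\Bigr),$$ and, if $n\neq4$, $$\mathrm{Id}_k=-\frac{k}{k+1}\Bigl(T\,\mathrm{Id}_{k-2}-\frac{1}{n-4}[T]\,\mathrm{Id}_{k-2}-\frac1k[\mathrm{Id}_{k-2}]\,T+\frac{1}{k(n-4)}[T][\mathrm{Id}_{k-2}]\Bigr).$$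
   Context: Square brackets around indices denote antisymmetrisation over the enclosed upper indices (here over $a,c_1,\dots,c_k$ in $\mathrm{Idn}_k$ and over $c_1,\dots,c_{k+1}$ in $\mathrm{Id}_k$). Index-free notation for $(1,1)$-tensors: products denote composition, $[X]=X^c{}_c$ is the trace, and scalar terms are multiplied by the identity $\delta^a_b$. No metric is assumed. *)

theory Defs
  imports "HOL-Combinatorics.Permutations"
begin

text \<open>Coordinates w.r.t. a basis of the n-dimensional space V: indices range over {..<n}.
  A (1,1)-tensor X^a_b is a function X a b (a upper, b lower); a 2-form A^{ab} is A a b.\<close>

definition tuples :: "nat \<Rightarrow> nat \<Rightarrow> nat list set" where
  "tuples n m = {cs. length cs = m \<and> set cs \<subseteq> {..<n}}"

definition alt :: "(nat list \<Rightarrow> 'a::field_char_0) \<Rightarrow> nat list \<Rightarrow> 'a" where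
  "alt F xs = (1 / fact (length xs)) *
     (\<Sum>\<sigma> | \<sigma> permutes {..<length xs}.
        of_int (sign \<sigma>) * F (map (\<lambda>i. xs ! \<sigma> i) [0..<length xs]))"

definition pprod :: "(nat \<Rightarrow> nat \<Rightarrow> 'a::field_char_0) \<Rightarrow> nat list \<Rightarrow> 'a" where
  "pprod X ys = (\<Prod>j<length ys div 2. X (ys ! (2*j)) (ys ! (2*j+1)))"

definition delta :: "nat \<Rightarrow> nat \<Rightarrow> 'a::field_char_0" where
  "delta a b = (if a = b then 1 else 0)"

definition tr :: "nat \<Rightarrow> (nat \<Rightarrow> nat \<Rightarrow> 'a::field_char_0) \<Rightarrow> 'a" where
  "tr n X = (\<Sum>c<n. X c c)"

definition comp :: "nat \<Rightarrow> (nat \<Rightarrow> nat \<Rightarrow> 'a::field_char_0) \<Rightarrow> (nat \<Rightarrow> nat \<Rightarrow> 'a) \<Rightarrow> nat \<Rightarrow> nat \<Rightarrow> 'a" where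
  "comp n X Y a b = (\<Sum>c<n. X a c * Y c b)"

definition Pt :: "nat \<Rightarrow> (nat \<Rightarrow> nat \<Rightarrow> 'a::field_char_0) \<Rightarrow> (nat \<Rightarrow> nat \<Rightarrow> 'a) \<Rightarrow> nat \<Rightarrow> nat \<Rightarrow> 'a" where
  "Pt n A B a b = (\<Sum>c<n. A a c * B b c)"

definition Tt :: "nat \<Rightarrow> (nat \<Rightarrow> nat \<Rightarrow> 'a::field_char_0) \<Rightarrow> (nat \<Rightarrow> nat \<Rightarrow> 'a) \<Rightarrow> nat \<Rightarrow> nat \<Rightarrow> 'a" where
  "Tt n A B a b = Pt n A B a b - (1/4) * tr n (Pt n A B) * delta a b"

definition Idn :: "nat \<Rightarrow> (nat \<Rightarrow> nat \<Rightarrow> 'a::field_char_0) \<Rightarrow> (nat \<Rightarrow> nat \<Rightarrow> 'a) \<Rightarrow> nat \<Rightarrow> nat \<Rightarrow> nat \<Rightarrow> 'a" where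
  "Idn n A B k a b = (\<Sum>cs\<in>tuples n k.
      alt (\<lambda>xs. delta (xs ! 0) b * pprod A (drop 1 xs)) (a # cs) * pprod B cs)"

definition Idk :: "nat \<Rightarrow> (nat \<Rightarrow> nat \<Rightarrow> 'a::field_char_0) \<Rightarrow> (nat \<Rightarrow> nat \<Rightarrow> 'a) \<Rightarrow> nat \<Rightarrow> nat \<Rightarrow> nat \<Rightarrow> 'a" where
  "Idk n A B k a b = (\<Sum>cs\<in>tuples n (k+1).
      alt (\<lambda>xs. A a (xs ! 0) * pprod A (drop 1 xs)) cs * B b (cs ! 0) * pprod B (drop 1 cs))"

end

theory Submission
  imports Defs
begin
abbreviation PS :: "nat \<Rightarrow> (nat \<Rightarrow> nat) set" where "PS N \<equiv> {\<sigma>. \<sigma> permutes {..<N}}"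

lemma finite_PS: "finite (PS N)"
  by (rule finite_permutations) simp

lemma alt_def': "alt F xs = (1 / fact (length xs)) *
   (\<Sum>\<sigma>\<in>PS (length xs). of_int (sign \<sigma>) * F (permute_list \<sigma> xs))"
  by (simp add: alt_def permute_list_def)

lemma alt_cong:
  assumes "\<And>ys. length ys = length xs \<Longrightarrow> set ys = set xs \<Longrightarrow> F ys = G ys"
  shows "alt F xs = alt G xs"
  unfolding alt_def' using assms
  by (intro arg_cong2[where f="(*)"] refl sum.cong) (auto simp: set_permute_list)

lemma alt_scale: "alt (\<lambda>ws. c * G ws) xs = c * alt G xs"
  unfolding alt_def' by (simp add: sum_distrib_left algebra_simps)

lemma perm_PS: "(\<sigma>::nat\<Rightarrow>nat) permutes {..<N} \<Longrightarrow> permutation \<sigma>"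
  by (rule permutes_imp_permutation[of "{..<N}"]) auto

lemma sign_inv_PS: "\<sigma> permutes {..<N::nat} \<Longrightarrow> sign (inv \<sigma>) = sign \<sigma>"
  by (simp add: perm_PS sign_inverse)

lemma sign_comp_PS: "\<sigma> permutes {..<N::nat} \<Longrightarrow> \<tau> permutes {..<N} \<Longrightarrow> sign (\<sigma> \<circ> \<tau>) = sign \<sigma> * sign \<tau>"
  by (simp add: perm_PS sign_compose)

lemma of_int_sign_sq: "(of_int (sign p) :: 'a::ring_1) * of_int (sign p) = 1"
  by (metis of_int_1 of_int_mult sign_idempotent)

lemma alt_perm_arg:
  assumes p: "\<pi> permutes {..<length xs}"
  shows "alt F (permute_list \<pi> xs) = of_int (sign \<pi>) * alt F xs"
proof -
  let ?N = "length xs"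
  have "(\<Sum>\<sigma>\<in>PS ?N. of_int (sign \<sigma>) * F (permute_list \<sigma> (permute_list \<pi> xs)))
      = (\<Sum>\<sigma>\<in>PS ?N. of_int (sign \<pi>) * (of_int (sign (\<pi> \<circ> \<sigma>)) * F (permute_list (\<pi> \<circ> \<sigma>) xs)))"
  proof (rule sum.cong[OF refl])
    fix \<sigma> assume s: "\<sigma> \<in> PS ?N"
    have "sign (\<pi> \<circ> \<sigma>) = sign \<pi> * sign \<sigma>"
      using s p by (simp add: sign_comp_PS)
    moreover have "(of_int (sign \<pi>) :: 'a) * of_int (sign \<pi>) = 1"
      by (metis of_int_1 of_int_mult sign_idempotent)
    ultimately show "of_int (sign \<sigma>) * F (permute_list \<sigma> (permute_list \<pi> xs))
      = of_int (sign \<pi>) * (of_int (sign (\<pi> \<circ> \<sigma>)) * F (permute_list (\<pi> \<circ> \<sigma>) xs))"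
      using s p by (simp add: permute_list_compose mult.assoc[symmetric])
  qed
  also have "\<dots> = of_int (sign \<pi>) * (\<Sum>\<sigma>\<in>PS ?N. of_int (sign (\<pi> \<circ> \<sigma>)) * F (permute_list (\<pi> \<circ> \<sigma>) xs))"
    by (simp add: sum_distrib_left)
  also have "(\<Sum>\<sigma>\<in>PS ?N. of_int (sign (\<pi> \<circ> \<sigma>)) * F (permute_list (\<pi> \<circ> \<sigma>) xs))
     = (\<Sum>\<sigma>\<in>PS ?N. of_int (sign \<sigma>) * F (permute_list \<sigma> xs))"
    by (rule sum.reindex_bij_witness[where i="\<lambda>\<sigma>. inv \<pi> \<circ> \<sigma>" and j="\<lambda>\<sigma>. \<pi> \<circ> \<sigma>"])
       (use p in \<open>auto simp: o_assoc permutes_inv_o permutes_compose permutes_inv\<close>)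
  finally show ?thesis unfolding alt_def' by simp
qed

lemma finite_tuples: "finite (tuples n N)"
  unfolding tuples_def using finite_lists_length_eq[of "{..<n}" N] by (simp add: conj_commute)

lemma perm_tuples:
  assumes "\<pi> permutes {..<N}" "cs \<in> tuples n N"
  shows "permute_list \<pi> cs \<in> tuples n N"
  using assms by (auto simp: tuples_def set_permute_list)

lemma permute_list_inv1:
  assumes "\<pi> permutes {..<length cs}"
  shows "permute_list (inv \<pi>) (permute_list \<pi> cs) = cs"
proof -
  have "permute_list (inv \<pi>) (permute_list \<pi> cs) = permute_list (\<pi> \<circ> inv \<pi>) cs"
    using assms by (simp add: permute_list_compose permutes_inv)
  also have "\<dots> = cs" using assms by (simp add: permutes_inv_o)
  finally show ?thesis .
qed

lemma permute_list_inv2: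
  assumes "\<pi> permutes {..<length cs}"
  shows "permute_list \<pi> (permute_list (inv \<pi>) cs) = cs"
proof -
  have "permute_list \<pi> (permute_list (inv \<pi>) cs) = permute_list (inv \<pi> \<circ> \<pi>) cs"
    using assms by (simp add: permute_list_compose permutes_inv)
  also have "\<dots> = cs" using assms by (simp add: permutes_inv_o)
  finally show ?thesis .
qed

lemma sum_tuples_perm:
  assumes p: "\<pi> permutes {..<N}"
  shows "(\<Sum>cs\<in>tuples n N. f (permute_list \<pi> cs)) = (\<Sum>cs\<in>tuples n N. f cs)"
  by (rule sum.reindex_bij_witness[where i="permute_list (inv \<pi>)" and j="permute_list \<pi>"])
     (use p in \<open>auto simp: permute_list_inv1 permute_list_inv2 perm_tuples permutes_inv tuples_def\<close>)

lemma sum_PS_inv: "(\<Sum>\<sigma>\<in>PS N. f (inv \<sigma>)) = (\<Sum>\<sigma>\<in>PS N. f \<sigma>)"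
  by (rule sum.reindex_bij_witness[where i="inv" and j="inv"])
     (auto simp: permutes_inv_inv permutes_inv)

lemma alt_adjoint:
  "(\<Sum>cs\<in>tuples n N. alt F cs * G cs) = (\<Sum>cs\<in>tuples n N. F cs * alt G cs)"
proof -
  have "(\<Sum>cs\<in>tuples n N. alt F cs * G cs) =
     (\<Sum>cs\<in>tuples n N. (1 / fact N) * (\<Sum>\<sigma>\<in>PS N. of_int (sign \<sigma>) * F (permute_list \<sigma> cs) * G cs))"
    by (intro sum.cong refl) (auto simp: alt_def' tuples_def sum_distrib_right)
  also have "\<dots> = (1 / fact N) * (\<Sum>\<sigma>\<in>PS N. of_int (sign \<sigma>) * (\<Sum>cs\<in>tuples n N. F (permute_list \<sigma> cs) * G cs))"
    by (simp add: sum_distrib_left sum.swap[of _ "tuples n N"] mult.assoc)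
  also have "\<dots> = (1 / fact N) * (\<Sum>\<sigma>\<in>PS N. of_int (sign \<sigma>) * (\<Sum>cs\<in>tuples n N. F cs * G (permute_list (inv \<sigma>) cs)))"
  proof -
    have "(\<Sum>cs\<in>tuples n N. F (permute_list \<sigma> cs) * G cs) = (\<Sum>cs\<in>tuples n N. F cs * G (permute_list (inv \<sigma>) cs))"
      if s: "\<sigma> \<in> PS N" for \<sigma>
    proof -
      have "(\<Sum>cs\<in>tuples n N. F cs * G (permute_list (inv \<sigma>) cs)) =
         (\<Sum>cs\<in>tuples n N. F (permute_list \<sigma> cs) * G (permute_list (inv \<sigma>) (permute_list \<sigma> cs)))"
        using sum_tuples_perm[where \<pi>=\<sigma> and N=N and n=n and f="\<lambda>cs. F cs * G (permute_list (inv \<sigma>) cs)"] s by simp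
      also have "\<dots> = (\<Sum>cs\<in>tuples n N. F (permute_list \<sigma> cs) * G cs)"
        using s by (intro sum.cong refl) (auto simp: tuples_def permute_list_inv1)
      finally show ?thesis by simp
    qed
    note X = this
    show ?thesis by (rule arg_cong2[where f="(*)"], rule refl, rule sum.cong, rule refl) (simp add: X)
  qed
  also have "\<dots> = (1 / fact N) * (\<Sum>\<sigma>\<in>PS N. of_int (sign (inv \<sigma>)) * (\<Sum>cs\<in>tuples n N. F cs * G (permute_list (inv \<sigma>) cs)))"
    by (intro arg_cong2[where f="(*)"] refl sum.cong) (auto simp: sign_inv_PS)
  also have "\<dots> = (1 / fact N) * (\<Sum>\<sigma>\<in>PS N. of_int (sign \<sigma>) * (\<Sum>cs\<in>tuples n N. F cs * G (permute_list \<sigma> cs)))"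
    by (subst sum_PS_inv[where f="\<lambda>\<sigma>. of_int (sign \<sigma>) * (\<Sum>cs\<in>tuples n N. F cs * G (permute_list \<sigma> cs))"]) simp
  also have "\<dots> = (1 / fact N) * (\<Sum>cs\<in>tuples n N. \<Sum>\<sigma>\<in>PS N. F cs * (of_int (sign \<sigma>) * G (permute_list \<sigma> cs)))"
    by (simp add: sum_distrib_left sum.swap[of _ "tuples n N"] mult.left_commute)
  also have "\<dots> = (\<Sum>cs\<in>tuples n N. F cs * alt G cs)"
    by (simp add: sum_distrib_left alt_def' tuples_def mult.left_commute)
  finally show ?thesis .
qed

definition lift :: "nat \<Rightarrow> (nat \<Rightarrow> nat) \<Rightarrow> nat \<Rightarrow> nat" where
  "lift N \<tau> = map_permutation {..<N} Suc \<tau>"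

lemma lift_0: "lift N \<tau> 0 = 0"
  by (auto simp: lift_def map_permutation_def restrict_id_def)

lemma lift_Suc:
  assumes "\<tau> permutes {..<N}"
  shows "lift N \<tau> (Suc i) = Suc (\<tau> i)"
proof (cases "i < N")
  case True
  have "inv_into {..<N} Suc (Suc i) = i"
    using True by (intro inv_into_f_f) auto
  then show ?thesis using True by (auto simp: lift_def map_permutation_def restrict_id_def)
next
  case False
  then show ?thesis using assms by (auto simp: lift_def map_permutation_def restrict_id_def permutes_not_in)
qed

lemma sign_lift:
  assumes "\<tau> permutes {..<N}"
  shows "sign (lift N \<tau>) = sign \<tau>"
  unfolding lift_def by (rule sign_map_permutation) (use assms in auto)

lemma Fix0_eq: "{\<sigma>. \<sigma> permutes Suc ` {..<N}} = {\<sigma>\<in>PS (Suc N). \<sigma> 0 = 0}"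
proof -
  have ins: "{..<Suc N} = insert 0 (Suc ` {..<N})"
    by (auto simp: image_iff) (metis lessThan_iff less_Suc_eq_0_disj)
  show ?thesis
  proof (intro equalityI subsetI; clarsimp)
    fix \<sigma> assume s: "\<sigma> permutes Suc ` {..<N}"
    show "\<sigma> permutes {..<Suc N} \<and> \<sigma> 0 = 0"
      using s by (auto intro: permutes_subset[OF s] permutes_not_in simp: ins)
  next
    fix \<sigma> assume s: "\<sigma> permutes {..<Suc N}" "\<sigma> 0 = 0"
    have "transpose 0 (\<sigma> 0) \<circ> \<sigma> permutes Suc ` {..<N}"
      by (rule permutes_insert_lemma) (use s in \<open>simp add: ins\<close>)
    then show "\<sigma> permutes Suc ` {..<N}" using s by simp
  qed
qed

lemma bij_lift: "bij_betw (lift N) (PS N) {\<sigma>\<in>PS (Suc N). \<sigma> 0 = 0}"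
proof -
  have b: "bij_betw Suc {..<N} (Suc ` {..<N})" by (simp add: bij_betw_def)
  have e: "lift N = (\<lambda>\<pi> x. if x \<in> Suc ` {..<N} then Suc (\<pi> (inv_into {..<N} Suc x)) else x)"
    by (auto simp: fun_eq_iff lift_def map_permutation_def restrict_id_def)
  show ?thesis using bij_betw_permutations[OF b] unfolding e Fix0_eq .
qed

lemma lift_permutes: "\<tau> permutes {..<N} \<Longrightarrow> lift N \<tau> permutes {..<Suc N}"
  using bij_betwE[OF bij_lift[of N]] by auto

lemma sum_Fix0: "(\<Sum>\<sigma>\<in>{\<sigma>\<in>PS (Suc N). \<sigma> 0 = 0}. g \<sigma>) = (\<Sum>\<tau>\<in>PS N. g (lift N \<tau>))"
  by (rule sum.reindex_bij_betw[symmetric]) (rule bij_lift)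

lemma permute_list_lift:
  assumes "\<tau> permutes {..<N}" "length ys = Suc N"
  shows "permute_list (lift N \<tau>) ys = ys ! 0 # permute_list \<tau> (tl ys)"
proof (rule nth_equalityI)
  show "length (permute_list (lift N \<tau>) ys) = length (ys ! 0 # permute_list \<tau> (tl ys))"
    using assms by simp
next
  fix i assume i: "i < length (permute_list (lift N \<tau>) ys)"
  show "permute_list (lift N \<tau>) ys ! i = (ys ! 0 # permute_list \<tau> (tl ys)) ! i"
  proof (cases i)
    case 0 then show ?thesis using i by (subst permute_list_nth) (simp_all add: lift_0 lift_permutes assms)
  next
    case (Suc j)
    have "\<tau> j < N" using assms i Suc permutes_in_image[OF assms(1), of j] by simp
    then show ?thesis using i Suc assms
      by (simp add: permute_list_nth lift_Suc nth_tl lift_permutes)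
  qed
qed

lemma sum_Fix0_sign:
  assumes "length ys = Suc N"
  shows "(\<Sum>\<sigma>\<in>{\<sigma>\<in>PS (Suc N). \<sigma> 0 = 0}. of_int (sign \<sigma>) * F (permute_list \<sigma> ys))
     = fact N * alt (\<lambda>ws. F (ys ! 0 # ws)) (tl ys)"
  unfolding sum_Fix0 alt_def' using assms
  by (simp add: sign_lift permute_list_lift)

definition gp :: "nat \<Rightarrow> nat \<Rightarrow> nat" where
  "gp p = (if p = 1 then transpose 0 1 else if even p then transpose 0 p \<circ> transpose 1 (Suc p)
           else transpose 0 p \<circ> transpose 1 (p - 1))"

lemma perm_lt: "\<sigma> permutes {..<N} \<Longrightarrow> i < N \<Longrightarrow> \<sigma> i < (N::nat)"
  using permutes_in_image[of \<sigma> "{..<N}" i] by simp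

lemma odd3: "odd (p::nat) \<Longrightarrow> p \<noteq> 1 \<Longrightarrow> p \<ge> 3"
  by presburger

lemma gp_permutes:
  assumes "even N" "p < N"
  shows "gp p permutes {..<N}"
proof -
  have "Suc p < N" if "even p" using assms that by (metis Suc_lessI odd_Suc_minus_one even_Suc)
  moreover have "1 < N" if "odd p" "p \<noteq> 1" using assms odd3[OF that] by simp
  ultimately show ?thesis using assms
    by (auto simp: gp_def intro!: permutes_compose permutes_swap_id)
qed

lemma gp_invol: "gp p \<circ> gp p = id"
  by (cases "p = 1"; cases "even p"; auto simp: gp_def fun_eq_iff transpose_def dest: odd3)

lemma gp_invol': "gp p (gp p x) = x"
  using gp_invol[of p] by (metis comp_apply id_apply)

lemma gp_p: "gp p p = 0"
  by (cases "p = 1"; cases "even p"; auto simp: gp_def transpose_def dest: odd3)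

lemma gp_0: "gp p 0 = p"
  by (cases "p = 1"; cases "even p"; auto simp: gp_def transpose_def dest: odd3)

lemma sign_gp: "sign (gp p) = (if p = 1 then -1 else 1)"
proof -
  have "sign (transpose 0 p \<circ> transpose 1 (Suc p)) = 1" if "even p" 
    using that by (simp add: sign_compose permutation_swap_id sign_swap_id)
  moreover have "sign (transpose 0 p \<circ> transpose 1 (p - 1)) = 1" if "odd p" "p \<noteq> 1"
    using that by (simp add: sign_compose permutation_swap_id sign_swap_id) presburger
  ultimately show ?thesis using odd3[of p] by (auto simp: gp_def sign_swap_id)
qed

lemma laplace:
  assumes len: "length ys = Suc N"
  shows "alt F ys = (1 / of_nat (Suc N)) * (\<Sum>b<Suc N. (if b = 0 then 1 else -1) *
      alt (\<lambda>ws. F (permute_list (transpose 0 b) ys ! 0 # ws)) (tl (permute_list (transpose 0 b) ys)))"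
proof -
  let ?h = "\<lambda>\<sigma>. of_int (sign \<sigma>) * F (permute_list \<sigma> ys)"
  have fin: "finite (PS (Suc N))" by (rule finite_PS)
  have "(\<Sum>\<sigma>\<in>PS (Suc N). ?h \<sigma>) = (\<Sum>b<Suc N. \<Sum>\<sigma>\<in>{\<sigma>. \<sigma> \<in> PS (Suc N) \<and> \<sigma> 0 = b}. ?h \<sigma>)"
    by (rule sum.group[symmetric]) (auto intro: fin perm_lt)
  also have "\<dots> = (\<Sum>b<Suc N. (if b = 0 then 1 else -1) * (fact N *
      alt (\<lambda>ws. F (permute_list (transpose 0 b) ys ! 0 # ws)) (tl (permute_list (transpose 0 b) ys))))"
  proof (rule sum.cong[OF refl])
    fix b assume b: "b \<in> {..<Suc N}"
    let ?t = "transpose 0 b"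
    have tp: "?t permutes {..<Suc N}" using b by (auto intro: permutes_swap_id)
    have "(\<Sum>\<sigma>\<in>{\<sigma>. \<sigma> \<in> PS (Suc N) \<and> \<sigma> 0 = b}. ?h \<sigma>) = (\<Sum>\<sigma>\<in>{\<sigma>\<in>PS (Suc N). \<sigma> 0 = 0}. ?h (?t \<circ> \<sigma>))"
      by (rule sum.reindex_bij_witness[where i="\<lambda>\<sigma>. ?t \<circ> \<sigma>" and j="\<lambda>\<sigma>. ?t \<circ> \<sigma>"])
         (use tp in \<open>auto simp: o_assoc swap_id_idempotent permutes_compose transpose_def\<close>)
    also have "\<dots> = (\<Sum>\<sigma>\<in>{\<sigma>\<in>PS (Suc N). \<sigma> 0 = 0}. of_int (sign ?t) * (of_int (sign \<sigma>) * F (permute_list \<sigma> (permute_list ?t ys))))"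
      by (intro sum.cong refl) (use tp len in \<open>auto simp: sign_comp_PS permute_list_compose\<close>)
    also have "\<dots> = of_int (sign ?t) * (\<Sum>\<sigma>\<in>{\<sigma>\<in>PS (Suc N). \<sigma> 0 = 0}. of_int (sign \<sigma>) * F (permute_list \<sigma> (permute_list ?t ys)))"
      by (simp add: sum_distrib_left)
    also have "\<dots> = (if b = 0 then 1 else -1) * (fact N *
      alt (\<lambda>ws. F (permute_list ?t ys ! 0 # ws)) (tl (permute_list ?t ys)))"
      by (subst sum_Fix0_sign) (use len in \<open>auto simp: sign_swap_id\<close>)
    finally show "(\<Sum>\<sigma>\<in>{\<sigma>. \<sigma> \<in> PS (Suc N) \<and> \<sigma> 0 = b}. ?h \<sigma>) = \<dots>" .
  qed
  also have "\<dots> = fact N * (\<Sum>b<Suc N. (if b = 0 then 1 else -1) *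
      alt (\<lambda>ws. F (permute_list (transpose 0 b) ys ! 0 # ws)) (tl (permute_list (transpose 0 b) ys)))"
    by (subst sum_distrib_left) (rule sum.cong; simp)
  finally have e: "(\<Sum>\<sigma>\<in>PS (Suc N). ?h \<sigma>) = \<dots>" .
  have fn: "(fact N :: 'a) \<noteq> 0" by simp
  show ?thesis
    unfolding alt_def'[of F ys] len e fact_Suc
    using fn by (simp del: of_nat_Suc)
qed

lemma one_plus_nat_nz: "(1 + of_nat N :: 'a::semiring_char_0) \<noteq> 0"
  by (metis of_nat_Suc of_nat_eq_0_iff nat.simps(3))

lemma alt_group:
  assumes len: "length ys = Suc N" and ev: "even (Suc N)"
    and H: "\<And>p \<sigma>. p < Suc N \<Longrightarrow> \<sigma> permutes {..<Suc N} \<Longrightarrow>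
        F (permute_list (gp p) (permute_list \<sigma> ys)) = of_int (sign (gp p)) * F (permute_list \<sigma> ys)"
  shows "alt F ys = alt (\<lambda>ws. F (ys ! 0 # ws)) (tl ys)"
proof -
  let ?h = "\<lambda>\<sigma>. of_int (sign \<sigma>) * F (permute_list \<sigma> ys)"
  have fin: "finite (PS (Suc N))" by (rule finite_PS)
  have "(\<Sum>\<sigma>\<in>PS (Suc N). ?h \<sigma>) = (\<Sum>p<Suc N. \<Sum>\<sigma>\<in>{\<sigma>. \<sigma> \<in> PS (Suc N) \<and> inv \<sigma> 0 = p}. ?h \<sigma>)"
    by (rule sum.group[symmetric]) (auto intro: fin perm_lt permutes_inv)
  also have "\<dots> = (\<Sum>p<Suc N. fact N * alt (\<lambda>ws. F (ys ! 0 # ws)) (tl ys))"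
  proof (rule sum.cong[OF refl])
    fix p assume p: "p \<in> {..<Suc N}"
    let ?g = "gp p"
    have gp: "?g permutes {..<Suc N}" using p ev by (intro gp_permutes) auto
    have "(\<Sum>\<sigma>\<in>{\<sigma>. \<sigma> \<in> PS (Suc N) \<and> inv \<sigma> 0 = p}. ?h \<sigma>) = (\<Sum>\<sigma>\<in>{\<sigma>\<in>PS (Suc N). \<sigma> 0 = 0}. ?h (\<sigma> \<circ> ?g))"
    proof -
      have A1: "\<sigma> \<circ> ?g \<circ> ?g = \<sigma>" for \<sigma> by (simp add: o_assoc[symmetric] gp_invol)
      have A2: "\<sigma> \<circ> ?g \<in> {\<sigma>. \<sigma> \<in> PS (Suc N) \<and> inv \<sigma> 0 = p}" if "\<sigma> \<in> {\<sigma>\<in>PS (Suc N). \<sigma> 0 = 0}" for \<sigma>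
      proof -
        from that have s: "\<sigma> permutes {..<Suc N}" "\<sigma> 0 = 0" by auto
        have "inv (\<sigma> \<circ> ?g) 0 = p"
          using permutes_inv_eq[OF permutes_compose[OF gp s(1)]] s by (simp add: gp_p)
        then show ?thesis using s gp by (auto intro: permutes_compose)
      qed
      have A3: "\<sigma> \<circ> ?g \<in> {\<sigma>\<in>PS (Suc N). \<sigma> 0 = 0}" if "\<sigma> \<in> {\<sigma>. \<sigma> \<in> PS (Suc N) \<and> inv \<sigma> 0 = p}" for \<sigma>
      proof -
        from that have s: "\<sigma> permutes {..<Suc N}" "inv \<sigma> 0 = p" by auto
        have "\<sigma> p = 0" using s permutes_inv_eq[OF s(1)] by simp
        then show ?thesis using s gp by (auto intro: permutes_compose simp: gp_0)
      qed
      show ?thesis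
        by (rule sum.reindex_bij_witness[where i="\<lambda>\<sigma>. \<sigma> \<circ> ?g" and j="\<lambda>\<sigma>. \<sigma> \<circ> ?g"])
           (simp_all only: A1 A2 A3)
    qed
    also have "\<dots> = (\<Sum>\<sigma>\<in>{\<sigma>\<in>PS (Suc N). \<sigma> 0 = 0}. ?h \<sigma>)"
    proof (rule sum.cong[OF refl])
      fix \<sigma> assume "\<sigma> \<in> {\<sigma>\<in>PS (Suc N). \<sigma> 0 = 0}"
      then have s: "\<sigma> permutes {..<Suc N}" by auto
      have "?h (\<sigma> \<circ> ?g) = of_int (sign \<sigma>) * of_int (sign ?g) * F (permute_list ?g (permute_list \<sigma> ys))"
        using s gp len by (simp add: sign_comp_PS permute_list_compose)
      also have "\<dots> = of_int (sign \<sigma>) * (of_int (sign ?g) * of_int (sign ?g)) * F (permute_list \<sigma> ys)"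
        using H[OF _ s(1)] p by (simp add: mult.assoc)
      finally show "?h (\<sigma> \<circ> ?g) = ?h \<sigma>" by (simp only: of_int_sign_sq mult_1_right)
    qed
    also have "\<dots> = fact N * alt (\<lambda>ws. F (ys ! 0 # ws)) (tl ys)"
      by (rule sum_Fix0_sign[OF len])
    finally show "(\<Sum>\<sigma>\<in>{\<sigma>. \<sigma> \<in> PS (Suc N) \<and> inv \<sigma> 0 = p}. ?h \<sigma>) = \<dots>" .
  qed
  also have "\<dots> = fact (Suc N) * alt (\<lambda>ws. F (ys ! 0 # ws)) (tl ys)"
    by (simp add: fact_Suc)
  finally have e: "(\<Sum>\<sigma>\<in>PS (Suc N). ?h \<sigma>) = \<dots>" .
  show ?thesis unfolding alt_def'[of F ys] len e by (simp add: one_plus_nat_nz)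
qed

lemma pp_cons: "pprod X (x # y # zs) = X x y * pprod X zs"
proof -
  have "pprod X (x # y # zs) = (\<Prod>j<Suc (length zs div 2). X ((x # y # zs) ! (2*j)) ((x # y # zs) ! (2*j+1)))"
    by (simp add: pprod_def)
  also have "\<dots> = X x y * (\<Prod>j<length zs div 2. X ((x # y # zs) ! (2*Suc j)) ((x # y # zs) ! (2*Suc j+1)))"
    by (subst prod.lessThan_Suc_shift) simp
  also have "\<dots> = X x y * pprod X zs"
    by (simp add: pprod_def)
  finally show ?thesis .
qed

lemma pprod_len: "length ws = 2 * m \<Longrightarrow> pprod X ws = (\<Prod>j<m. X (ws ! (2*j)) (ws ! (2*j+1)))"
  by (simp add: pprod_def)

lemma pprod_pairperm:
  assumes len: "length ws = 2 * m" and ws: "set ws \<subseteq> {..<n}"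
    and skew: "\<forall>i<n. \<forall>j<n. X i j = - X j i"
    and g: "g permutes {..<2*m}"
    and rho: "\<rho> permutes {..<m}" and sw: "sw \<subseteq> {..<m}"
    and H: "\<And>j. j < m \<Longrightarrow> (j \<notin> sw \<and> g (2*j) = 2 * \<rho> j \<and> g (2*j+1) = 2 * \<rho> j + 1)
                          \<or> (j \<in> sw \<and> g (2*j) = 2 * \<rho> j + 1 \<and> g (2*j+1) = 2 * \<rho> j)"
  shows "pprod X (permute_list g ws) = (-1) ^ card sw * pprod X ws"
proof -
  let ?f = "\<lambda>i. X (ws ! (2*i)) (ws ! (2*i+1))"
  have "pprod X (permute_list g ws) = (\<Prod>j<m. X (ws ! g (2*j)) (ws ! g (2*j+1)))"
    using len g by (simp add: pprod_len permute_list_nth)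
  also have "\<dots> = (\<Prod>j<m. (if j \<in> sw then -1 else 1) * ?f (\<rho> j))"
  proof (rule prod.cong[OF refl])
    fix j assume j: "j \<in> {..<m}"
    have rj: "\<rho> j < m" using rho j by (simp add: perm_lt)
    have i1: "ws ! (2 * \<rho> j) < n" "ws ! (2 * \<rho> j + 1) < n"
      using ws rj len by (auto simp: subset_iff)
    have sk: "X (ws ! (2 * \<rho> j + 1)) (ws ! (2 * \<rho> j)) = - ?f (\<rho> j)"
      using skew i1 by blast
    from H[of j] j show "X (ws ! g (2*j)) (ws ! g (2*j+1)) = (if j \<in> sw then -1 else 1) * ?f (\<rho> j)"
      using sk by auto
  qed
  also have "\<dots> = (\<Prod>j<m. (if j \<in> sw then -1 else 1)) * (\<Prod>j<m. ?f (\<rho> j))"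
    by (rule prod.distrib)
  also have "(\<Prod>j<m. ?f (\<rho> j)) = pprod X ws"
    using prod.permute[OF rho, of ?f] len by (simp add: pprod_len o_def)
  also have "(\<Prod>j<m. (if j \<in> sw then -1 else 1)) = ((-1) ^ card sw :: 'a)"
  proof -
    have "(\<Prod>j<m. (if j \<in> sw then -1 else 1)) = (\<Prod>j\<in>{..<m} \<inter> sw. (-1::'a))"
      by (simp add: prod.If_cases)
    also have "{..<m} \<inter> sw = sw" using sw by auto
    finally show ?thesis by simp
  qed
  finally show ?thesis .
qed

lemma pp_gp:
  assumes len: "length ws = N" and ev: "even N" and p: "p < N" and ws: "set ws \<subseteq> {..<n}"
    and skew: "\<forall>i<n. \<forall>j<n. X i j = - X j i"
  shows "pprod X (permute_list (gp p) ws) = of_int (sign (gp p)) * pprod X ws"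
proof -
  obtain m where m: "N = 2 * m" using ev by blast
  have g: "gp p permutes {..<2*m}" using gp_permutes[OF ev p] m by simp
  have len': "length ws = 2 * m" using len m by simp
  show ?thesis
  proof (cases "p = 1")
    case True
    have "pprod X (permute_list (gp p) ws) = (-1) ^ card {0::nat} * pprod X ws"
      by (rule pprod_pairperm[OF len' ws skew g permutes_id, where sw="{0}"])
         (use p m True in \<open>auto simp: gp_def transpose_def\<close>)
    then show ?thesis using True by (simp add: sign_gp)
  next
    case False
    note F = False
    show ?thesis
    proof (cases "even p")
      case True
      then obtain q where q: "p = 2 * q" by blast
      have qm: "q < m" using p q m by simp
      have "pprod X (permute_list (gp p) ws) = (-1) ^ card ({}::nat set) * pprod X ws"
        by (rule pprod_pairperm[OF len' ws skew g permutes_swap_id[of 0 "{..<m}" q]])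
           (use qm q True in \<open>auto simp: gp_def transpose_def\<close>)
      then show ?thesis using F by (simp add: sign_gp)
    next
      case False
      then obtain q where q: "p = 2 * q + 1" by (metis oddE)
      have q0: "q \<noteq> 0" using q F by simp
      have qm: "q < m" using p q m by simp
      have "pprod X (permute_list (gp p) ws) = (-1) ^ card {0, q} * pprod X ws"
        by (rule pprod_pairperm[OF len' ws skew g permutes_swap_id[of 0 "{..<m}" q]])
           (use qm q q0 False in \<open>auto simp: gp_def transpose_def\<close>)
      then show ?thesis using F q0 by (simp add: sign_gp)
    qed
  qed
qed

lemma sum_tuples_Suc:
  "(\<Sum>cs\<in>tuples n (Suc N). f cs) = (\<Sum>c<n. \<Sum>ds\<in>tuples n N. f (c # ds))"
proof -
  have "(\<Sum>cs\<in>tuples n (Suc N). f cs) = (\<Sum>x\<in>{..<n} \<times> tuples n N. f (fst x # snd x))"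
    by (rule sum.reindex_bij_witness[where i="\<lambda>x. (fst x # snd x)" and j="\<lambda>cs. (hd cs, tl cs)"])
       (auto simp: tuples_def length_Suc_conv)
  also have "\<dots> = (\<Sum>c<n. \<Sum>ds\<in>tuples n N. f (c # ds))"
    by (simp add: sum.cartesian_product case_prod_beta)
  finally show ?thesis .
qed

lemma perm_t0_Suc:
  assumes "i < length cs"
  shows "permute_list (transpose 0 (Suc i)) (a # cs) = cs ! i # cs[i := a]"
proof (rule nth_equalityI)
  show "length (permute_list (transpose 0 (Suc i)) (a # cs)) = length (cs ! i # cs[i := a])" by simp
next
  fix j assume j: "j < length (permute_list (transpose 0 (Suc i)) (a # cs))"
  have tp: "transpose 0 (Suc i) permutes {..<length (a # cs)}"
    using assms by (intro permutes_swap_id) auto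
  show "permute_list (transpose 0 (Suc i)) (a # cs) ! j = (cs ! i # cs[i := a]) ! j"
    using j assms by (cases j) (auto simp: permute_list_nth[OF tp] transpose_def nth_list_update)
qed

lemma L_exp:
  assumes "length cs = N"
  shows "alt (\<lambda>xs. u (xs ! 0) * G (drop 1 xs)) (a # cs) =
     1 / of_nat (Suc N) * (u a * alt G cs - (\<Sum>i<N. u (cs ! i) * alt G (cs[i := a])))"
proof -
  have "alt (\<lambda>xs. u (xs ! 0) * G (drop 1 xs)) (a # cs) =
     1 / of_nat (Suc N) * (\<Sum>b<Suc N. (if b = 0 then 1 else -1) *
      alt (\<lambda>ws. u ((permute_list (transpose 0 b) (a # cs) ! 0 # ws) ! 0) * G (drop 1 (permute_list (transpose 0 b) (a # cs) ! 0 # ws)))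
          (tl (permute_list (transpose 0 b) (a # cs))))"
    by (rule laplace) (simp add: assms)
  also have "\<dots> = 1 / of_nat (Suc N) * (\<Sum>b<Suc N. (if b = 0 then 1 else -1) *
      (u (permute_list (transpose 0 b) (a # cs) ! 0) * alt G (tl (permute_list (transpose 0 b) (a # cs)))))"
    by (simp add: alt_scale)
  also have "\<dots> = 1 / of_nat (Suc N) * (u a * alt G cs - (\<Sum>i<N. u (cs ! i) * alt G (cs[i := a])))"
    by (subst sum.lessThan_Suc_shift) (simp add: perm_t0_Suc assms sum_negf)
  finally show ?thesis .
qed

definition Jd :: "nat \<Rightarrow> (nat \<Rightarrow> nat \<Rightarrow> 'a::field_char_0) \<Rightarrow> (nat \<Rightarrow> nat \<Rightarrow> 'a) \<Rightarrow> nat \<Rightarrow> nat \<Rightarrow> nat \<Rightarrow> 'a" where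
  "Jd n A B k a b = (\<Sum>ds\<in>tuples n (k - 1). alt (pprod A) (a # ds) * pprod B (b # ds))"

lemma delta_sum: "b < n \<Longrightarrow> (\<Sum>c<n. delta c b * f c) = (f b :: 'a::field_char_0)"
proof -
  have "\<And>c. delta c b * f c = (if c = b then f c else 0)" by (simp add: delta_def)
  then show "b < n \<Longrightarrow> ?thesis" by simp
qed

lemma delta_sum': "b < n \<Longrightarrow> (\<Sum>c<n. f c * delta c b) = (f b :: 'a::field_char_0)"
proof -
  have "\<And>c. f c * delta c b = (if c = b then f c else 0)" by (simp add: delta_def)
  then show "b < n \<Longrightarrow> ?thesis" by simp
qed

lemma alt_antisym01: "alt F (c # e # fs) = - alt F (e # c # fs)"
proof -
  have tp: "transpose 0 1 permutes {..<length (e # c # fs)}" by (intro permutes_swap_id) auto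
  have p: "permute_list (transpose 0 1) (e # c # fs) = c # e # fs"
  proof (rule nth_equalityI)
    fix i assume i: "i < length (permute_list (transpose 0 1) (e # c # fs))"
    show "permute_list (transpose 0 1) (e # c # fs) ! i = (c # e # fs) ! i"
    proof (cases "i < 2")
      case True
      then have "i = 0 \<or> i = 1" by auto
      then show ?thesis using tp by (auto simp: permute_list_nth)
    next
      case False
      then obtain j where "i = Suc (Suc j)" by (metis add_2_eq_Suc le_add_diff_inverse not_less)
      then show ?thesis using tp i by (simp add: permute_list_nth transpose_def)
    qed
  qed simp
  show ?thesis using alt_perm_arg[OF tp, of F] p by (simp add: sign_swap_id)
qed

context
  fixes A B :: "nat \<Rightarrow> nat \<Rightarrow> 'a::field_char_0" and n k :: nat
  assumes A_skew: "\<forall>i<n. \<forall>j<n. A i j = - A j i"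
    and B_skew: "\<forall>i<n. \<forall>j<n. B i j = - B j i"
    and kev: "even k" and k2: "k \<ge> 2"
begin

lemma tuples_mem: "cs \<in> tuples n N \<longleftrightarrow> length cs = N \<and> set cs \<subseteq> {..<n}"
  by (simp add: tuples_def)

lemma E2:
  assumes a: "a < n" and ds: "ds \<in> tuples n (k - 1)"
  shows "alt (pprod A) (a # ds) = alt (\<lambda>ws. pprod A (a # ws)) ds"
proof -
  have len: "length (a # ds) = Suc (k - 1)" using ds k2 by (simp add: tuples_mem)
  have ev: "even (Suc (k - 1))" using kev k2 by simp
  have st: "set (a # ds) \<subseteq> {..<n}" using a ds by (simp add: tuples_mem)
  have "alt (pprod A) (a # ds) = alt (\<lambda>ws. pprod A ((a # ds) ! 0 # ws)) (tl (a # ds))"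
  proof (rule alt_group[OF len ev])
    fix p \<sigma> assume p: "p < Suc (k - 1)" and s: "\<sigma> permutes {..<Suc (k - 1)}"
    show "pprod A (permute_list (gp p) (permute_list \<sigma> (a # ds))) = of_int (sign (gp p)) * pprod A (permute_list \<sigma> (a # ds))"
      by (rule pp_gp[OF _ ev p _ A_skew]) (use len st s in \<open>auto simp: set_permute_list\<close>)
  qed
  then show ?thesis by simp
qed

lemma alpha_gp:
  assumes "ws \<in> tuples n k" "p < k"
  shows "pprod B (permute_list (gp p) ws) = of_int (sign (gp p)) * pprod B ws"
  using assms by (intro pp_gp[OF _ kev _ _ B_skew]) (auto simp: tuples_mem)

lemma upd_perm_gp:
  assumes "length ws = k" "i < k"
  shows "(permute_list (gp i) ws)[i := c] = permute_list (gp i) (ws[0 := c])"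
proof (rule nth_equalityI)
  have gp: "gp i permutes {..<k}" using assms kev by (intro gp_permutes) auto
  show "length ((permute_list (gp i) ws)[i := c]) = length (permute_list (gp i) (ws[0 := c]))" by simp
  fix j assume j: "j < length ((permute_list (gp i) ws)[i := c])"
  have gj: "gp i j < k" using gp j assms by (simp add: perm_lt)
  have "gp i j = 0 \<longleftrightarrow> j = i"
    by (metis gp_invol' gp_0 gp_p)
  then show "(permute_list (gp i) ws)[i := c] ! j = permute_list (gp i) (ws[0 := c]) ! j"
    using j assms gj gp by (auto simp: permute_list_nth nth_list_update)
qed

lemma sym_i:
  assumes i: "i < k"
  shows "(\<Sum>ws\<in>tuples n k. u (ws ! i) * alt (pprod A) (ws[i := c]) * pprod B ws)
       = (\<Sum>ws\<in>tuples n k. u (ws ! 0) * alt (pprod A) (ws[0 := c]) * pprod B ws)"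
proof -
  let ?g = "gp i"
  have gp: "?g permutes {..<k}" using i kev by (intro gp_permutes) auto
  have "(\<Sum>ws\<in>tuples n k. u (ws ! i) * alt (pprod A) (ws[i := c]) * pprod B ws)
     = (\<Sum>ws\<in>tuples n k. u (permute_list ?g ws ! i) * alt (pprod A) ((permute_list ?g ws)[i := c]) * pprod B (permute_list ?g ws))"
    by (rule sum_tuples_perm[OF gp, symmetric])
  also have "\<dots> = (\<Sum>ws\<in>tuples n k. u (ws ! 0) * alt (pprod A) (ws[0 := c]) * pprod B ws)"
  proof (rule sum.cong[OF refl])
    fix ws assume ws: "ws \<in> tuples n k"
    have len: "length ws = k" using ws by (simp add: tuples_mem)
    have "u (permute_list ?g ws ! i) * alt (pprod A) ((permute_list ?g ws)[i := c]) * pprod B (permute_list ?g ws)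
        = u (ws ! 0) * (of_int (sign ?g) * alt (pprod A) (ws[0 := c])) * (of_int (sign ?g) * pprod B ws)"
      using len i gp by (simp add: permute_list_nth gp_p upd_perm_gp alt_perm_arg alpha_gp[OF ws i])
    also have "\<dots> = u (ws ! 0) * alt (pprod A) (ws[0 := c]) * pprod B ws * (of_int (sign ?g) * of_int (sign ?g))"
      by (simp add: algebra_simps)
    finally show "u (permute_list ?g ws ! i) * alt (pprod A) ((permute_list ?g ws)[i := c]) * pprod B (permute_list ?g ws)
        = u (ws ! 0) * alt (pprod A) (ws[0 := c]) * pprod B ws" by (simp only: of_int_sign_sq mult_1_right)
  qed
  finally show ?thesis .
qed

lemma Id_eq:
  assumes a: "a < n"
  shows "Idk n A B (k - 2) a b = Jd n A B k a b"
  unfolding Idk_def Jd_def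
proof -
  have kk: "k - 2 + 1 = k - 1" using k2 by simp
  show "(\<Sum>cs\<in>tuples n (k - 2 + 1). alt (\<lambda>xs. A a (xs ! 0) * pprod A (drop 1 xs)) cs * B b (cs ! 0) * pprod B (drop 1 cs))
      = (\<Sum>ds\<in>tuples n (k - 1). alt (pprod A) (a # ds) * pprod B (b # ds))"
    unfolding kk
  proof (rule sum.cong[OF refl])
    fix cs assume cs: "cs \<in> tuples n (k - 1)"
    then have len: "length cs = k - 1" by (simp add: tuples_mem)
    then obtain c cs' where c: "cs = c # cs'" using k2 by (cases cs) auto
    have "alt (\<lambda>xs. A a (xs ! 0) * pprod A (drop 1 xs)) cs = alt (\<lambda>ws. pprod A (a # ws)) cs"
    proof (rule alt_cong)
      fix ys :: "nat list" assume "length ys = length cs"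
      then obtain y ys' where "ys = y # ys'" using c by (cases ys) auto
      then show "A a (ys ! 0) * pprod A (drop 1 ys) = pprod A (a # ys)" by (simp add: pp_cons)
    qed
    also have "\<dots> = alt (pprod A) (a # cs)" using E2[OF a cs] by simp
    finally show "alt (\<lambda>xs. A a (xs ! 0) * pprod A (drop 1 xs)) cs * B b (cs ! 0) * pprod B (drop 1 cs)
        = alt (pprod A) (a # cs) * pprod B (b # cs)"
      using c by (simp add: pp_cons mult.assoc)
  qed
qed

abbreviation "SS \<equiv> (\<Sum>cs\<in>tuples n k. alt (pprod A) cs * pprod B cs)"

lemma tr_eq: "tr n (Idk n A B (k - 2)) = SS"
proof -
  have kk: "k = Suc (k - 1)" using k2 by simp
  have "tr n (Idk n A B (k - 2)) = (\<Sum>a<n. Jd n A B k a a)"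
    unfolding tr_def by (rule sum.cong) (auto simp: Id_eq)
  also have "\<dots> = SS"
    unfolding Jd_def by (subst kk) (simp only: sum_tuples_Suc diff_Suc_1)
  finally show ?thesis .
qed

lemma W0_eq:
  assumes b: "b < n"
  shows "(\<Sum>ws\<in>tuples n k. delta (ws ! 0) b * alt (pprod A) (ws[0 := a]) * pprod B ws) = Jd n A B k a b"
proof -
  have kk: "k = Suc (k - 1)" using k2 by simp
  have "(\<Sum>ws\<in>tuples n k. delta (ws ! 0) b * alt (pprod A) (ws[0 := a]) * pprod B ws)
      = (\<Sum>c<n. \<Sum>ds\<in>tuples n (k - 1). delta c b * (alt (pprod A) (a # ds) * pprod B (c # ds)))"
    by (subst kk) (simp only: sum_tuples_Suc diff_Suc_1 nth_Cons_0 list_update_code mult.assoc)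
  also have "\<dots> = (\<Sum>c<n. delta c b * (\<Sum>ds\<in>tuples n (k - 1). alt (pprod A) (a # ds) * pprod B (c # ds)))"
    by (simp add: sum_distrib_left)
  also have "\<dots> = Jd n A B k a b" unfolding Jd_def by (rule delta_sum[OF b])
  finally show ?thesis .
qed

lemma Idn_eq:
  assumes a: "a < n" and b: "b < n"
  shows "Idn n A B k a b = 1 / of_nat (Suc k) * (delta a b * SS - of_nat k * Jd n A B k a b)"
proof -
  let ?W = "\<lambda>i. (\<Sum>cs\<in>tuples n k. delta (cs ! i) b * alt (pprod A) (cs[i := a]) * pprod B cs)"
  have "Idn n A B k a b = (\<Sum>cs\<in>tuples n k. 1 / of_nat (Suc k) * (delta a b * alt (pprod A) cs
       - (\<Sum>i<k. delta (cs ! i) b * alt (pprod A) (cs[i := a]))) * pprod B cs)"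
    unfolding Idn_def
  proof (rule sum.cong[OF refl])
    fix cs assume "cs \<in> tuples n k"
    then have "length cs = k" by (simp add: tuples_mem)
    from L_exp[OF this, of "\<lambda>x. delta x b" "pprod A" a]
    show "alt (\<lambda>xs. delta (xs ! 0) b * pprod A (drop 1 xs)) (a # cs) * pprod B cs =
       1 / of_nat (Suc k) * (delta a b * alt (pprod A) cs
       - (\<Sum>i<k. delta (cs ! i) b * alt (pprod A) (cs[i := a]))) * pprod B cs" by simp
  qed
  also have "\<dots> = 1 / of_nat (Suc k) * (delta a b * SS - (\<Sum>i<k. ?W i))"
    by (simp add: sum_distrib_left sum_distrib_right sum_subtractf left_diff_distrib right_diff_distrib
         sum.swap[of _ "{..<k}"] mult.assoc)
  also have "(\<Sum>i<k. ?W i) = (\<Sum>i<k. ?W 0)"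
    by (rule sum.cong[OF refl]) (rule sym_i, simp)
  also have "\<dots> = of_nat k * Jd n A B k a b" using W0_eq[OF b] by simp
  finally show ?thesis .
qed

lemma swap_lemma:
  assumes d: "d < n"
  shows "(\<Sum>c<n. \<Sum>es\<in>tuples n (k - 1). B b c * alt (pprod A) (c # es) * pprod B (d # es))
       = (\<Sum>c<n. B c d * Jd n A B k c b)"
proof -
  have kk: "k - 1 = Suc (k - 2)" using k2 by simp
  let ?T = "tuples n (k - 2)"
  have "(\<Sum>c<n. \<Sum>es\<in>tuples n (k - 1). B b c * alt (pprod A) (c # es) * pprod B (d # es))
     = (\<Sum>c<n. \<Sum>e<n. \<Sum>fs\<in>?T. B b c * alt (pprod A) (c # e # fs) * (B d e * pprod B fs))"
    by (simp only: kk sum_tuples_Suc pp_cons)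
  also have "\<dots> = (\<Sum>c<n. \<Sum>e<n. \<Sum>fs\<in>?T. - (B b c * alt (pprod A) (e # c # fs) * B d e * pprod B fs))"
  proof (intro sum.cong refl)
    fix c e fs
    show "B b c * alt (pprod A) (c # e # fs) * (B d e * pprod B fs) = - (B b c * alt (pprod A) (e # c # fs) * B d e * pprod B fs)"
      by (subst alt_antisym01) (simp add: algebra_simps)
  qed
  also have "\<dots> = (\<Sum>e<n. \<Sum>c<n. \<Sum>fs\<in>?T. - (B b c * alt (pprod A) (e # c # fs) * B d e * pprod B fs))"
    by (rule sum.swap)
  also have "\<dots> = (\<Sum>c<n. \<Sum>e<n. \<Sum>fs\<in>?T. B c d * alt (pprod A) (c # e # fs) * (B b e * pprod B fs))"
  proof (intro sum.cong refl)
    fix c e fs assume c: "c \<in> {..<n}"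
    have "B d c = - B c d" using B_skew c d by blast
    then show "- (B b e * alt (pprod A) (c # e # fs) * B d c * pprod B fs) = B c d * alt (pprod A) (c # e # fs) * (B b e * pprod B fs)"
      by (simp add: algebra_simps)
  qed
  also have "\<dots> = (\<Sum>c<n. B c d * (\<Sum>es\<in>tuples n (k - 1). alt (pprod A) (c # es) * pprod B (b # es)))"
    by (simp only: kk sum_tuples_Suc pp_cons sum_distrib_left mult.assoc)
  also have "\<dots> = (\<Sum>c<n. B c d * Jd n A B k c b)" by (simp add: Jd_def)
  finally show ?thesis .
qed

lemma V_eq:
  "(\<Sum>c<n. B b c * (\<Sum>d<n. \<Sum>es\<in>tuples n (k - 1). A a d * alt (pprod A) (c # es) * pprod B (d # es)))
    = (\<Sum>c<n. Pt n A B a c * Jd n A B k c b)"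
proof -
  have "(\<Sum>c<n. B b c * (\<Sum>d<n. \<Sum>es\<in>tuples n (k - 1). A a d * alt (pprod A) (c # es) * pprod B (d # es)))
     = (\<Sum>d<n. A a d * (\<Sum>c<n. \<Sum>es\<in>tuples n (k - 1). B b c * alt (pprod A) (c # es) * pprod B (d # es)))"
  proof -
    have "(\<Sum>c<n. B b c * (\<Sum>d<n. \<Sum>es\<in>tuples n (k - 1). A a d * alt (pprod A) (c # es) * pprod B (d # es)))
       = (\<Sum>c<n. \<Sum>d<n. A a d * (\<Sum>es\<in>tuples n (k - 1). B b c * alt (pprod A) (c # es) * pprod B (d # es)))"
      by (simp only: sum_distrib_left mult.assoc mult.left_commute)
    also have "\<dots> = (\<Sum>d<n. \<Sum>c<n. A a d * (\<Sum>es\<in>tuples n (k - 1). B b c * alt (pprod A) (c # es) * pprod B (d # es)))"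
      by (rule sum.swap)
    also have "\<dots> = (\<Sum>d<n. A a d * (\<Sum>c<n. \<Sum>es\<in>tuples n (k - 1). B b c * alt (pprod A) (c # es) * pprod B (d # es)))"
      by (simp only: sum_distrib_left)
    finally show ?thesis .
  qed
  also have "\<dots> = (\<Sum>d<n. A a d * (\<Sum>c<n. B c d * Jd n A B k c b))"
    by (intro sum.cong refl) (simp only: swap_lemma lessThan_iff)
  also have "\<dots> = (\<Sum>c<n. Pt n A B a c * Jd n A B k c b)"
  proof -
    have "(\<Sum>d<n. A a d * (\<Sum>c<n. B c d * Jd n A B k c b)) = (\<Sum>d<n. \<Sum>c<n. A a d * B c d * Jd n A B k c b)"
      by (simp only: sum_distrib_left mult.assoc)
    also have "\<dots> = (\<Sum>c<n. \<Sum>d<n. A a d * B c d * Jd n A B k c b)" by (rule sum.swap)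
    also have "\<dots> = (\<Sum>c<n. Pt n A B a c * Jd n A B k c b)"
      by (simp only: Pt_def sum_distrib_right)
    finally show ?thesis .
  qed
  finally show ?thesis .
qed

lemma Q_eq:
  "(\<Sum>ds\<in>tuples n k. A a (ds ! 0) * alt (pprod A) (ds[0 := c]) * pprod B ds)
    = (\<Sum>d<n. \<Sum>es\<in>tuples n (k - 1). A a d * alt (pprod A) (c # es) * pprod B (d # es))"
proof -
  have kk: "k = Suc (k - 1)" using k2 by simp
  show ?thesis
    by (subst kk) (simp only: sum_tuples_Suc diff_Suc_1 nth_Cons_0 list_update_code)
qed

lemma Idk_eq:
  assumes a: "a < n" and b: "b < n"
  shows "Idk n A B k a b = 1 / of_nat (Suc k) * (Pt n A B a b * SS - of_nat k * (\<Sum>c<n. Pt n A B a c * Jd n A B k c b))"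
proof -
  let ?Y = "\<lambda>c i. (\<Sum>ds\<in>tuples n k. A a (ds ! i) * alt (pprod A) (ds[i := c]) * pprod B ds)"
  have "Idk n A B k a b = (\<Sum>c<n. \<Sum>ds\<in>tuples n k. alt (\<lambda>xs. A a (xs ! 0) * pprod A (drop 1 xs)) (c # ds) * B b c * pprod B ds)"
  proof -
    have kk: "k + 1 = Suc k" by simp
    show ?thesis unfolding Idk_def kk sum_tuples_Suc by simp
  qed
  also have "\<dots> = (\<Sum>c<n. 1 / of_nat (Suc k) * (A a c * B b c * SS - B b c * (\<Sum>i<k. ?Y c i)))"
  proof (rule sum.cong[OF refl])
    fix c
    have "(\<Sum>ds\<in>tuples n k. alt (\<lambda>xs. A a (xs ! 0) * pprod A (drop 1 xs)) (c # ds) * B b c * pprod B ds)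
       = (\<Sum>ds\<in>tuples n k. 1 / of_nat (Suc k) * (A a c * alt (pprod A) ds
           - (\<Sum>i<k. A a (ds ! i) * alt (pprod A) (ds[i := c]))) * B b c * pprod B ds)"
    proof (rule sum.cong[OF refl])
      fix ds assume "ds \<in> tuples n k"
      then have "length ds = k" by (simp add: tuples_mem)
      from L_exp[OF this, of "A a" "pprod A" c]
      show "alt (\<lambda>xs. A a (xs ! 0) * pprod A (drop 1 xs)) (c # ds) * B b c * pprod B ds =
         1 / of_nat (Suc k) * (A a c * alt (pprod A) ds
           - (\<Sum>i<k. A a (ds ! i) * alt (pprod A) (ds[i := c]))) * B b c * pprod B ds" by simp
    qed
    also have "\<dots> = 1 / of_nat (Suc k) * (A a c * B b c * SS - B b c * (\<Sum>i<k. ?Y c i))"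
      by (simp add: sum_distrib_left sum_distrib_right sum_subtractf left_diff_distrib right_diff_distrib
         sum.swap[of _ "{..<k}"] mult.assoc mult.left_commute)
    finally show "(\<Sum>ds\<in>tuples n k. alt (\<lambda>xs. A a (xs ! 0) * pprod A (drop 1 xs)) (c # ds) * B b c * pprod B ds)
       = 1 / of_nat (Suc k) * (A a c * B b c * SS - B b c * (\<Sum>i<k. ?Y c i))" .
  qed
  also have "\<dots> = (\<Sum>c<n. 1 / of_nat (Suc k) * (A a c * B b c * SS - of_nat k * (B b c *
        (\<Sum>d<n. \<Sum>es\<in>tuples n (k - 1). A a d * alt (pprod A) (c # es) * pprod B (d # es)))))"
  proof (rule sum.cong[OF refl])
    fix c
    have "(\<Sum>i<k. ?Y c i) = (\<Sum>i<k. ?Y c 0)"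
      by (rule sum.cong[OF refl]) (rule sym_i, simp)
    also have "\<dots> = of_nat k * (\<Sum>d<n. \<Sum>es\<in>tuples n (k - 1). A a d * alt (pprod A) (c # es) * pprod B (d # es))"
      by (simp add: Q_eq)
    finally show "1 / of_nat (Suc k) * (A a c * B b c * SS - B b c * (\<Sum>i<k. ?Y c i)) = 
        1 / of_nat (Suc k) * (A a c * B b c * SS - of_nat k * (B b c *
        (\<Sum>d<n. \<Sum>es\<in>tuples n (k - 1). A a d * alt (pprod A) (c # es) * pprod B (d # es))))"
      by (simp add: algebra_simps)
  qed
  also have "\<dots> = 1 / of_nat (Suc k) * ((\<Sum>c<n. A a c * B b c) * SS - of_nat k * (\<Sum>c<n. B b c *
        (\<Sum>d<n. \<Sum>es\<in>tuples n (k - 1). A a d * alt (pprod A) (c # es) * pprod B (d # es))))"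
    by (simp only: sum_distrib_left[symmetric] sum_distrib_right[symmetric] sum_subtractf)
  also have "\<dots> = 1 / of_nat (Suc k) * (Pt n A B a b * SS - of_nat k * (\<Sum>c<n. Pt n A B a c * Jd n A B k c b))"
    by (simp only: V_eq Pt_def)
  finally show ?thesis .
qed

end

lemma delta_sym: "delta a b = delta b a"
  by (simp add: delta_def eq_commute)

lemma alg1:
  fixes K x y d :: "'a::field"
  assumes "K \<noteq> 0" "K + 1 \<noteq> 0"
  shows "1 / (1 + K) * (d * x - K * y) = - (K / (K + 1)) * (y - (1 / K) * x * d)"
proof -
  have a: "1 + K \<noteq> 0" using assms by (simp add: add.commute)
  have b: "K + K * K \<noteq> 0" using assms a by (metis distrib_left mult_1_right mult_eq_0_iff add.commute)
  show ?thesis using assms a b by (simp add: field_simps)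
qed

lemma alg3:
  fixes K N x z p q y d :: "'a::field_char_0"
  assumes "K \<noteq> 0" "K + 1 \<noteq> 0" "N - 4 \<noteq> 0"
  shows "1 / (1 + K) * (p * x - K * z) = - (K / (K + 1)) *
     ((z - 1/4 * q * y) - (1 / (N - 4)) * (q - 1/4 * q * N) * y - (1 / K) * x * (p - 1/4 * q * d)
      + (1 / (K * (N - 4))) * (q - 1/4 * q * N) * x * d)"
proof -
  have e: "(1 / (N - 4)) * (q - 1/4 * q * N) = - (1/4 * q)"
    using assms(3) by (simp add: field_simps)
  have "(z - 1/4 * q * y) - (1 / (N - 4)) * (q - 1/4 * q * N) * y - (1 / K) * x * (p - 1/4 * q * d)
      + (1 / (K * (N - 4))) * (q - 1/4 * q * N) * x * d
      = (z - 1/4 * q * y) - ((1 / (N - 4)) * (q - 1/4 * q * N)) * y - (1 / K) * x * (p - 1/4 * q * d)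
      + (1 / K) * ((1 / (N - 4)) * (q - 1/4 * q * N)) * x * d"
    using assms by (simp add: field_simps)
  also have "\<dots> = z - (1 / K) * x * p" unfolding e by (simp add: algebra_simps)
  finally have "(z - 1/4 * q * y) - (1 / (N - 4)) * (q - 1/4 * q * N) * y - (1 / K) * x * (p - 1/4 * q * d)
      + (1 / (K * (N - 4))) * (q - 1/4 * q * N) * x * d = z - (1 / K) * x * p" .
  then show ?thesis using alg1[OF assms(1,2), of p x z] by simp
qed

theorem theorem9:
  fixes A B :: "nat \<Rightarrow> nat \<Rightarrow> 'a::field_char_0" and n k :: nat
  assumes A_skew: "\<forall>i<n. \<forall>j<n. A i j = - A j i"
    and B_skew: "\<forall>i<n. \<forall>j<n. B i j = - B j i"
    and k: "even k" "k \<ge> 2"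
  shows "(\<forall>a<n. \<forall>b<n. Idn n A B k a b =
            - (of_nat k / (of_nat k + 1)) *
              (Idk n A B (k-2) a b - (1 / of_nat k) * tr n (Idk n A B (k-2)) * delta a b))
       \<and> (\<forall>a<n. \<forall>b<n. Idk n A B k a b =
            - (of_nat k / (of_nat k + 1)) *
              (\<Sum>c<n. Pt n A B a c *
                 (Idk n A B (k-2) c b - (1 / of_nat k) * tr n (Idk n A B (k-2)) * delta c b)))
       \<and> (n \<noteq> 4 \<longrightarrow> (\<forall>a<n. \<forall>b<n. Idk n A B k a b =
            - (of_nat k / (of_nat k + 1)) *
              (comp n (Tt n A B) (Idk n A B (k-2)) a b
               - (1 / (of_nat n - 4)) * tr n (Tt n A B) * Idk n A B (k-2) a b
               - (1 / of_nat k) * tr n (Idk n A B (k-2)) * Tt n A B a b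
               + (1 / (of_nat k * (of_nat n - 4))) * tr n (Tt n A B) * tr n (Idk n A B (k-2)) * delta a b)))"
proof -
  let ?I = "Idk n A B (k-2)"
  let ?S = "\<Sum>cs\<in>tuples n k. alt (pprod A) cs * pprod B cs"
  let ?J = "Jd n A B k"
  let ?P = "Pt n A B"
  have trI: "tr n ?I = ?S" by (rule tr_eq[OF A_skew B_skew k])
  have IJ: "\<And>a b. a < n \<Longrightarrow> ?I a b = ?J a b" by (rule Id_eq[OF A_skew B_skew k])
  have kz: "(of_nat k :: 'a) \<noteq> 0" using k by simp
  have k1z: "(of_nat k + 1 :: 'a) \<noteq> 0" using one_plus_nat_nz[of k] by (simp add: add.commute)
  have sumPI: "(\<Sum>c<n. ?P a c * (?I c b - (1 / of_nat k) * tr n ?I * delta c b))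
      = (\<Sum>c<n. ?P a c * ?J c b) - (1 / of_nat k) * ?S * ?P a b" if b: "b < n" for a b
  proof -
    define x where "x = (1 / of_nat k) * tr n ?I"
    have "(\<Sum>c<n. ?P a c * (?I c b - (1 / of_nat k) * tr n ?I * delta c b))
        = (\<Sum>c<n. ?P a c * ?J c b - ?P a c * delta c b * x)"
      by (rule sum.cong[OF refl]) (simp add: IJ x_def right_diff_distrib mult_ac)
    also have "\<dots> = (\<Sum>c<n. ?P a c * ?J c b) - (\<Sum>c<n. ?P a c * delta c b) * x"
      by (simp only: sum_subtractf sum_distrib_right)
    finally have "(\<Sum>c<n. ?P a c * (?I c b - (1 / of_nat k) * tr n ?I * delta c b))
        = (\<Sum>c<n. ?P a c * ?J c b) - (\<Sum>c<n. ?P a c * delta c b) * ((1 / of_nat k) * ?S)"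
      by (simp only: x_def trI)
    also have "(\<Sum>c<n. ?P a c * delta c b) = ?P a b" by (rule delta_sum'[OF b])
    finally show ?thesis by (simp add: mult_ac)
  qed
  have C1: "\<forall>a<n. \<forall>b<n. Idn n A B k a b =
            - (of_nat k / (of_nat k + 1)) *
              (?I a b - (1 / of_nat k) * tr n ?I * delta a b)"
  proof (intro allI impI)
    fix a b assume a: "a < n" and b: "b < n"
    show "Idn n A B k a b = - (of_nat k / (of_nat k + 1)) * (?I a b - (1 / of_nat k) * tr n ?I * delta a b)"
      unfolding Idn_eq[OF A_skew B_skew k a b] IJ[OF a] trI of_nat_Suc
      by (rule alg1[OF kz k1z])
  qed
  have C2': "Idk n A B k a b = - (of_nat k / (of_nat k + 1)) *
              (\<Sum>c<n. ?P a c * (?I c b - (1 / of_nat k) * tr n ?I * delta c b))"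
    if a: "a < n" and b: "b < n" for a b
    unfolding Idk_eq[OF A_skew B_skew k a b] sumPI[OF b] of_nat_Suc
    by (rule alg1[OF kz k1z])
  have C3: "Idk n A B k a b =
            - (of_nat k / (of_nat k + 1)) *
              (comp n (Tt n A B) ?I a b
               - (1 / (of_nat n - 4)) * tr n (Tt n A B) * ?I a b
               - (1 / of_nat k) * tr n ?I * Tt n A B a b
               + (1 / (of_nat k * (of_nat n - 4))) * tr n (Tt n A B) * tr n ?I * delta a b)"
    if n4: "n \<noteq> 4" and a: "a < n" and b: "b < n" for a b
  proof -
    have nz: "(of_nat n - 4 :: 'a) \<noteq> 0"
    proof
      assume "(of_nat n - 4 :: 'a) = 0"
      then have "(of_nat n :: 'a) = of_nat 4" by simp
      then have "n = 4" by (simp only: of_nat_eq_iff)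
      with n4 show False by simp
    qed
    let ?p = "tr n ?P"
    have compT: "comp n (Tt n A B) ?I a b = (\<Sum>c<n. ?P a c * ?J c b) - 1/4 * ?p * ?J a b"
    proof -
      have "comp n (Tt n A B) ?I a b = (\<Sum>c<n. ?P a c * ?J c b - delta c a * ?J c b * (1/4 * ?p))"
        unfolding comp_def Tt_def
        by (rule sum.cong[OF refl]) (simp add: IJ delta_sym[of a] algebra_simps)
      also have "\<dots> = (\<Sum>c<n. ?P a c * ?J c b) - (\<Sum>c<n. delta c a * ?J c b) * (1/4 * ?p)"
        by (simp only: sum_subtractf sum_distrib_right)
      also have "(\<Sum>c<n. delta c a * ?J c b) = ?J a b" by (rule delta_sum[OF a])
      finally show ?thesis by (simp add: mult_ac)
    qed
    have trT: "tr n (Tt n A B) = ?p - 1/4 * ?p * of_nat n"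
    proof -
      have "tr n (Tt n A B) = (\<Sum>c<n. ?P c c - delta c c * (1/4 * ?p))"
        unfolding tr_def[of n "Tt n A B"] Tt_def by (simp add: mult_ac)
      also have "\<dots> = ?p - (\<Sum>c<n. delta c c) * (1/4 * ?p)"
        by (simp only: sum_subtractf sum_distrib_right tr_def[of n "Pt n A B"])
      also have "(\<Sum>c<n. delta c c :: 'a) = of_nat n" by (simp add: delta_def)
      finally show ?thesis by (simp add: mult_ac)
    qed
    have Tab: "Tt n A B a b = ?P a b - 1/4 * ?p * delta a b" by (simp add: Tt_def)
    have "Idk n A B k a b = 1 / of_nat (Suc k) * (?P a b * ?S - of_nat k * (\<Sum>c<n. ?P a c * ?J c b))"
      by (rule Idk_eq[OF A_skew B_skew k a b])
    then show ?thesis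
      unfolding compT trT Tab IJ[OF a] trI of_nat_Suc
      using alg3[OF kz k1z nz] by simp
  qed
  show ?thesis using C1 C2' C3 by blast
qed

end
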